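(* Let $(P_n(x))_{n \ge 1}$ be a splitting sequence such that $P_1(x)$ is not a monomial. Then: (1) if $P_1(x)$ is nice, then for each $n \in \mathbb{N}$ the polynomial $P_n(x)$ is nice if and only if it is irreducible in $\mathbb{Z}[x]$; (2) if the binary string of $(P_n(x))_{n \ge 1}$ contains infinitely many copies of $S$, then $P_1(x)$ is nice (and hence, for each $n$, $P_n(x)$ is nice if and only if it is irreducible).
   Context: A polynomial in $\mathbb{Z}[x]$ is nice if it is irreducible in $\mathbb{Z}[x]$ and its leading and constant coefficients both lie in $\{\pm 1\}$. Splitting sequence of an irreducible $P \in \mathbb{Z}[x]$: a sequence $(P_n)_{n \ge 1}$ in $\mathbb{Z}[x]$ with $P_1 = P$ such that for each $n$: if $P_n$ is irreducible in $\mathbb{Z}[x]$, then $P_{n+1}(x) = P_n(x^2)$; if $P_n$ is reducible, then (as $n \ge 2$, $P_{n-1}$ is irreducible and $P_n(x) = P_{n-1}(x^2)$ factors in $\mathbb{Z}[x]$ as a product of exactly two irreducibles) $P_{n+1}$ is one of these two irreducible factors. Its binary string is $s_1 s_2 \ldots$ with $s_n = L$ if $P_n$ is irreducible and $s_n = S$ otherwise. *)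

theory Defs
  imports "HOL-Computational_Algebra.Polynomial_Factorial"
begin

definition nice :: "int poly \<Rightarrow> bool" where
  "nice p \<longleftrightarrow> irreducible p \<and> lead_coeff p \<in> {1, -1} \<and> coeff p 0 \<in> {1, -1}"

definition sq_subst :: "int poly \<Rightarrow> int poly" where
  "sq_subst p = pcompose p (monom 1 2)"

text \<open>Splitting sequence of an irreducible polynomial. The sequence is indexed by
n >= 1; the value at 0 is irrelevant.\<close>
definition splitting_sequence :: "(nat \<Rightarrow> int poly) \<Rightarrow> bool" where
  "splitting_sequence P \<longleftrightarrow>
     irreducible (P 1) \<and>
     (\<forall>n\<ge>1. (irreducible (P n) \<longrightarrow> P (Suc n) = sq_subst (P n)) \<and>
             (\<not> irreducible (P n) \<longrightarrow>
                (\<exists>Q R. irreducible Q \<and> irreducible R \<and> P n = Q * R \<and> P (Suc n) = Q)))"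

definition string_is_S :: "(nat \<Rightarrow> int poly) \<Rightarrow> nat \<Rightarrow> bool" where
  "string_is_S P n \<longleftrightarrow> \<not> irreducible (P n)"

end

theory Submission
  imports Defs
begin

lemma sq_coeff: "coeff (pcompose (p::int poly) (monom 1 2)) n = (if even n then coeff p (n div 2) else 0)"
proof (induction p arbitrary: n)
  case 0 then show ?case by simp
next
  case (pCons a p)
  show ?case
  proof (cases n)
    case 0 then show ?thesis by (simp add: pcompose_pCons coeff_monom_mult)
  next
    case (Suc m)
    then show ?thesis
      by (cases m) (auto simp: pcompose_pCons coeff_monom_mult pCons.IH coeff_pCons)
  qed
qed

lemma sq_degree: "degree (sq_subst (p::int poly)) = 2 * degree p"
  by (simp add: sq_subst_def degree_pcompose degree_monom_eq)

lemma sq_lead: "lead_coeff (sq_subst (p::int poly)) = lead_coeff p"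
  by (simp add: sq_degree) (simp add: sq_subst_def sq_coeff)

lemma sq_const: "coeff (sq_subst (p::int poly)) 0 = coeff p 0"
  by (simp add: sq_subst_def sq_coeff poly_0_coeff_0)

lemma sq_inj: "sq_subst (p::int poly) = sq_subst q \<Longrightarrow> p = q"
proof (rule poly_eqI)
  fix n assume "sq_subst p = sq_subst q"
  then have "coeff (sq_subst p) (2*n) = coeff (sq_subst q) (2*n)" by simp
  then show "coeff p n = coeff q n" by (simp add: sq_subst_def sq_coeff)
qed

definition neg :: "int poly \<Rightarrow> int poly" where "neg p = pcompose p [:0, -1:]"

lemma neg_coeff: "coeff (neg p) i = (-1)^i * coeff p i"
  by (simp add: neg_def coeff_pcompose_linear)

lemma neg_neg[simp]: "neg (neg p) = p"
  by (rule poly_eqI) (simp add: neg_coeff)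

lemma neg_mult: "neg (p * q) = neg p * neg q"
  by (simp add: neg_def pcompose_mult)

lemma neg_degree[simp]: "degree (neg p) = degree p"
  by (simp add: neg_def degree_pcompose)

lemma neg_unit: "is_unit (neg p) \<Longrightarrow> is_unit p"
  by (metis neg_mult neg_neg dvd_def  mult.commute neg_def pcompose_1)

lemma neg_irred: assumes "irreducible p" shows "irreducible (neg p)"
proof (rule irreducibleI)
  show "neg p \<noteq> 0" using assms by (metis irreducible_def neg_neg neg_def pcompose_0)
  show "\<not> is_unit (neg p)" using assms neg_unit by (auto simp: irreducible_def)
  fix a b assume "neg p = a * b"
  then have "p = neg a * neg b" by (metis neg_mult neg_neg)
  then have "is_unit (neg a) \<or> is_unit (neg b)" using assms by (auto simp: irreducible_def)
  then show "is_unit a \<or> is_unit b" using neg_unit by blast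
qed


lemma sq_mult: "sq_subst (p * q) = sq_subst p * sq_subst q"
  by (simp add: sq_subst_def pcompose_mult)

lemma sq_unit: "is_unit (p::int poly) \<Longrightarrow> is_unit (sq_subst p)"
proof -
  assume "is_unit p"
  then obtain q where "1 = p * q" by (auto simp: dvd_def)
  then have "sq_subst 1 = sq_subst p * sq_subst q" by (metis sq_mult)
  moreover have "sq_subst 1 = 1" by (simp add: sq_subst_def pcompose_1)
  ultimately have "1 = sq_subst p * sq_subst q" by simp
  then show ?thesis by (rule dvdI)
qed

lemma neg_sq: "neg (sq_subst p) = sq_subst p"
  by (rule poly_eqI) (simp add: neg_coeff sq_subst_def sq_coeff)

lemma even_poly: assumes "neg Q = Q" shows "\<exists>G. Q = sq_subst G"
proof -
  have odd0: "coeff Q i = 0" if "odd i" for i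
  proof -
    have "coeff (neg Q) i = coeff Q i" using assms by simp
    then show ?thesis using that by (simp add: neg_coeff)
  qed
  define G where "G = Abs_poly (\<lambda>i. coeff Q (2*i))"
  have cG: "coeff G = (\<lambda>i. coeff Q (2*i))" unfolding G_def
    by (rule coeff_Abs_poly[where n="degree Q"]) (simp add: coeff_eq_0)
  have "Q = sq_subst G"
    by (rule poly_eqI) (auto simp: sq_subst_def sq_coeff cG odd0)
  then show ?thesis by blast
qed

lemma unit_int_poly: "is_unit (c::int poly) \<Longrightarrow> \<exists>u. c = [:u:] \<and> \<bar>u\<bar> = 1"
proof -
  assume "is_unit c"
  then obtain u where "c = [:u:]" "u dvd 1" using is_unit_poly_iff by blast
  then show ?thesis by auto
qed

lemma key:
  assumes P: "irreducible P" and c0: "coeff P 0 \<noteq> 0"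
    and F: "sq_subst P = Q * R" and Q: "irreducible Q" and R: "irreducible R"
  shows "\<bar>lead_coeff P\<bar> = \<bar>lead_coeff Q\<bar>^2 \<and> \<bar>coeff P 0\<bar> = \<bar>coeff Q 0\<bar>^2"
proof -
  have "coeff P 0 = coeff Q 0 * coeff R 0" using F sq_const[of P] by (simp add: coeff_mult_0)
  then have Q0: "coeff Q 0 \<noteq> 0" using c0 by auto
  have nF: "neg Q * neg R = Q * R" using F neg_sq[of P] by (simp add: neg_mult)
  have nQ: "irreducible (neg Q)" using Q by (rule neg_irred)
  then have "prime_elem (neg Q)" using irreducible_imp_prime_elem by blast
  moreover have "neg Q dvd Q * R" using nF by (metis dvd_triv_left)
  ultimately have "neg Q dvd Q \<or> neg Q dvd R" using prime_elem_dvd_multD by blast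
  then show ?thesis
  proof
    assume "neg Q dvd Q"
    then obtain c where c: "Q = neg Q * c" by (auto simp: dvd_def)
    have "\<not> is_unit (neg Q)" using nQ by (rule irreducible_not_unit)
    then have "is_unit c" using irreducibleD[OF Q c] by blast
    then obtain u where u: "c = [:u:]" "\<bar>u\<bar> = 1" using unit_int_poly by blast
    have "coeff Q 0 = coeff Q 0 * u" using arg_cong[OF c, of "\<lambda>p. coeff p 0"]
      by (simp add: coeff_mult_0 neg_coeff u)
    then have "u = 1" using Q0 by simp
    then have QQ: "neg Q = Q" using c u by simp
    then have "Q * neg R = Q * R" using nF by simp
    moreover have "Q \<noteq> 0" using Q by auto
    ultimately have RR: "neg R = R" by simp
    obtain G where G: "Q = sq_subst G" using even_poly[OF QQ] by blast
    obtain H where H: "R = sq_subst H" using even_poly[OF RR] by blast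
    have "sq_subst P = sq_subst (G * H)" using F G H by (simp add: sq_mult)
    then have "P = G * H" by (rule sq_inj)
    then have "is_unit G \<or> is_unit H" using irreducibleD[OF P] by blast
    then have "is_unit Q \<or> is_unit R" using G H sq_unit by blast
    then show ?thesis using Q R irreducible_not_unit by blast
  next
    assume "neg Q dvd R"
    then obtain c where c: "R = neg Q * c" by (auto simp: dvd_def)
    have "\<not> is_unit (neg Q)" using nQ by (rule irreducible_not_unit)
    then have "is_unit c" using irreducibleD[OF R c] by blast
    then obtain u where u: "c = [:u:]" "\<bar>u\<bar> = 1" using unit_int_poly by blast
    have lR: "lead_coeff R = (-1)^degree Q * lead_coeff Q * u"
      using c u by (simp add: lead_coeff_mult neg_coeff)
    have cR: "coeff R 0 = coeff Q 0 * u"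
      using c u by (simp add: coeff_mult_0 neg_coeff)
    have "lead_coeff P = lead_coeff Q * lead_coeff R" using F sq_lead[of P] by (simp add: lead_coeff_mult)
    then have a1: "\<bar>lead_coeff P\<bar> = \<bar>lead_coeff Q\<bar> * \<bar>lead_coeff R\<bar>" by (simp add: abs_mult)
    have a2: "\<bar>lead_coeff R\<bar> = \<bar>lead_coeff Q\<bar>" unfolding lR using u(2) by (simp add: abs_mult power_abs)
    have "coeff P 0 = coeff Q 0 * coeff R 0" using F sq_const[of P] by (simp add: coeff_mult_0)
    then have b1: "\<bar>coeff P 0\<bar> = \<bar>coeff Q 0\<bar> * \<bar>coeff R 0\<bar>" by (simp add: abs_mult)
    have b2: "\<bar>coeff R 0\<bar> = \<bar>coeff Q 0\<bar>" unfolding cR using u(2) by (simp add: abs_mult)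
    show ?thesis using a1 a2 b1 b2 by (simp add: power2_eq_square)
  qed
qed


lemma prev_irred:
  assumes sp: "splitting_sequence P" and n: "n \<ge> 2" and nr: "\<not> irreducible (P n)"
  shows "irreducible (P (n-1)) \<and> P n = sq_subst (P (n-1))"
proof -
  have sucn: "Suc (n-1) = n" using n by simp
  have m1: "n - 1 \<ge> 1" using n by simp
  have "irreducible (P (n-1))"
  proof (rule ccontr)
    assume "\<not> irreducible (P (n-1))"
    then obtain Q R where "irreducible Q" "P (Suc (n-1)) = Q"
      using sp m1 unfolding splitting_sequence_def by blast
    then show False using nr sucn by simp
  qed
  moreover then have "P (Suc (n-1)) = sq_subst (P (n-1))"
    using sp m1 unfolding splitting_sequence_def by blast
  ultimately show ?thesis using sucn by simp
qed

lemma const_nz: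
  assumes sp: "splitting_sequence P" and c1: "coeff (P 1) 0 \<noteq> 0" and n: "n \<ge> 1"
  shows "coeff (P n) 0 \<noteq> 0"
  using n
proof (induction n rule: nat_induct_at_least)
  case base then show ?case using c1 by simp
next
  case (Suc n)
  show ?case
  proof (cases "irreducible (P n)")
    case True
    then have "P (Suc n) = sq_subst (P n)" using sp Suc.hyps unfolding splitting_sequence_def by blast
    then show ?thesis using Suc.IH by (simp add: sq_const)
  next
    case False
    then obtain Q R where "P n = Q * R" "P (Suc n) = Q" using sp Suc.hyps unfolding splitting_sequence_def by blast
    then show ?thesis using Suc.IH by (auto simp: coeff_mult_0)
  qed
qed

lemma int_prod_pm1: "\<bar>(x::int) * y\<bar> = 1 \<Longrightarrow> \<bar>x\<bar> = 1"
  by (metis abs_mult abs_ge_zero pos_zmult_eq_1_iff_lemma abs_zmult_eq_1)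

lemma pm1:
  assumes sp: "splitting_sequence P" and l1: "\<bar>lead_coeff (P 1)\<bar> = 1" and c1: "\<bar>coeff (P 1) 0\<bar> = 1"
    and n: "n \<ge> 1"
  shows "\<bar>lead_coeff (P n)\<bar> = 1 \<and> \<bar>coeff (P n) 0\<bar> = 1"
  using n
proof (induction n rule: nat_induct_at_least)
  case base then show ?case using c1 l1 by simp
next
  case (Suc n)
  show ?case
  proof (cases "irreducible (P n)")
    case True
    then have "P (Suc n) = sq_subst (P n)" using sp Suc.hyps unfolding splitting_sequence_def by blast
    then show ?thesis using Suc.IH by (simp add: sq_const sq_lead)
  next
    case False
    then obtain Q R where "P n = Q * R" "P (Suc n) = Q" using sp Suc.hyps unfolding splitting_sequence_def by blast
    then show ?thesis using Suc.IH int_prod_pm1 by (auto simp: coeff_mult_0 lead_coeff_mult)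
  qed
qed

lemma seq_one:
  fixes a :: "nat \<Rightarrow> int" and S :: "nat \<Rightarrow> bool"
  assumes pos: "\<And>n. n \<ge> 1 \<Longrightarrow> a n \<ge> 1"
    and stepS: "\<And>n. n \<ge> 1 \<Longrightarrow> S n \<Longrightarrow> a n = a (Suc n)^2"
    and stepL: "\<And>n. n \<ge> 1 \<Longrightarrow> \<not> S n \<Longrightarrow> a (Suc n) = a n"
    and inf: "infinite {n. n \<ge> 1 \<and> S n}"
  shows "a 1 = 1"
proof -
  define e where "e = rec_nat (1::nat) (\<lambda>n x. if 1 \<le> n \<and> S n then 2*x else x)"
  have e0: "e 0 = 1" by (simp add: e_def)
  have eS: "e (Suc n) = (if 1 \<le> n \<and> S n then 2 * e n else e n)" for n by (simp add: e_def)
  have c1: "a 1 = a n ^ e n" if "n \<ge> 1" for n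
    using that
  proof (induction n rule: nat_induct_at_least)
    case base then show ?case using e0 eS[of 0] by simp
  next
    case (Suc n)
    show ?case
    proof (cases "S n")
      case True
      then have "a n ^ e n = (a (Suc n)^2)^(e n)" using stepS Suc.hyps by simp
      also have "\<dots> = a (Suc n) ^ e (Suc n)" using True Suc.hyps eS[of n] by (simp add: power_mult)
      finally show ?thesis using Suc.IH by simp
    next
      case False
      then show ?thesis using Suc.IH stepL Suc.hyps eS[of n] by simp
    qed
  qed
  have epos: "e n \<ge> 1" for n by (induction n) (auto simp: e0 eS)
  have emono: "mono e" by (rule incseq_SucI) (simp add: eS)
  have c3: "\<exists>n\<ge>1. e n \<ge> k" for k
  proof (induction k)
    case 0 then show ?case by auto
  next
    case (Suc k)
    then obtain n where n: "n \<ge> 1" "e n \<ge> k" by blast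
    obtain m where m: "m \<ge> n" "m \<in> {n. n \<ge> 1 \<and> S n}" using inf infinite_nat_iff_unbounded_le by blast
    have "e (Suc m) = 2 * e m" using m eS[of m] by simp
    moreover have "e m \<ge> e n" using emono m(1) by (simp add: monoD)
    ultimately have "e (Suc m) \<ge> Suc k" using n(2) epos[of n] by linarith
    then show ?case by (intro exI[of _ "Suc m"]) simp
  qed
  show ?thesis
  proof (rule ccontr)
    assume ne: "a 1 \<noteq> 1"
    then have a1: "a 1 \<ge> 2" using pos[of 1] by simp
    obtain n where n: "n \<ge> 1" "e n \<ge> nat (a 1)" using c3 by blast
    have an: "a n \<ge> 2"
    proof (rule ccontr)
      assume "\<not> a n \<ge> 2"
      then have "a n = 1" using pos[OF n(1)] by simp
      then show False using c1[OF n(1)] ne by simp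
    qed
    have "(2::int) ^ e n \<le> a n ^ e n" using an by (intro power_mono) auto
    moreover have "int (e n) < 2 ^ e n"
    proof -
      have "e n < 2 ^ e n" by (rule less_exp)
      then show ?thesis by (metis of_nat_less_iff of_nat_numeral of_nat_power)
    qed
    ultimately have "int (e n) < a n ^ e n" by linarith
    then have "int (e n) < a 1" using c1[OF n(1)] by simp
    then show False using n(2) a1 by linarith
  qed
qed


lemma const1:
  assumes sp: "splitting_sequence P" and nm: "\<not> (\<exists>c k. P 1 = monom c k)"
  shows "coeff (P 1) 0 \<noteq> 0"
proof
  assume "coeff (P 1) 0 = 0"
  then have "poly (P 1) (-0) = 0" by (simp add: poly_0_coeff_0)
  then have "[:0, 1:] dvd P 1" by (simp add: dvd_iff_poly_eq_0)
  then obtain r where r: "P 1 = [:0, 1:] * r" by (auto simp: dvd_def)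
  have irr: "irreducible (P 1)" using sp unfolding splitting_sequence_def by blast
  have "\<not> is_unit ([:0, 1:] :: int poly)"
  proof
    assume "is_unit ([:0, 1:] :: int poly)"
    then obtain c where "([:0, 1:] :: int poly) = [:c:]" using is_unit_poly_iff by blast
    then show False by simp
  qed
  then have "is_unit r" using irreducibleD[OF irr r] by blast
  then obtain u where "r = [:u:]" using is_unit_poly_iff by blast
  then have "P 1 = monom u 1" using r by (simp add: monom_Suc monom_0)
  then show False using nm by blast
qed

theorem lemma3p13:
  fixes P :: "nat \<Rightarrow> int poly"
  assumes "splitting_sequence P"
    and "\<not> (\<exists>c k. P 1 = monom c k)"
  shows "(nice (P 1) \<longrightarrow> (\<forall>n\<ge>1. nice (P n) \<longleftrightarrow> irreducible (P n)))
       \<and> (infinite {n. n \<ge> 1 \<and> string_is_S P n} \<longrightarrow>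
            nice (P 1) \<and> (\<forall>n\<ge>1. nice (P n) \<longleftrightarrow> irreducible (P n)))"
proof -
  note sp = assms(1)
  have irr1: "irreducible (P 1)" using sp unfolding splitting_sequence_def by blast
  have part1: "\<forall>n\<ge>1. nice (P n) \<longleftrightarrow> irreducible (P n)" if "nice (P 1)"
  proof (intro allI impI)
    fix n :: nat assume n: "n \<ge> 1"
    have "\<bar>lead_coeff (P 1)\<bar> = 1" "\<bar>coeff (P 1) 0\<bar> = 1" using that by (auto simp: nice_def)
    then have "\<bar>lead_coeff (P n)\<bar> = 1 \<and> \<bar>coeff (P n) 0\<bar> = 1" using pm1[OF sp _ _ n] by blast
    then have "lead_coeff (P n) \<in> {1, -1}" "coeff (P n) 0 \<in> {1, -1}" by auto
    then show "nice (P n) \<longleftrightarrow> irreducible (P n)" by (auto simp: nice_def)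
  qed
  have part2: "nice (P 1)" if inf: "infinite {n. n \<ge> 1 \<and> string_is_S P n}"
  proof -
    have c1: "coeff (P 1) 0 \<noteq> 0" by (rule const1[OF sp assms(2)])
    have cnz: "coeff (P n) 0 \<noteq> 0" if "n \<ge> 1" for n using const_nz[OF sp c1 that] .
    have pnz: "P n \<noteq> 0" if "n \<ge> 1" for n using cnz[OF that] by auto
    have stepS: "\<bar>lead_coeff (P n)\<bar> = \<bar>lead_coeff (P (Suc n))\<bar>^2 \<and> \<bar>coeff (P n) 0\<bar> = \<bar>coeff (P (Suc n)) 0\<bar>^2"
      if n: "n \<ge> 1" and S: "string_is_S P n" for n
    proof -
      have nr: "\<not> irreducible (P n)" using S by (simp add: string_is_S_def)
      then have "n \<noteq> 1" using irr1 by auto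
      then have n2: "n \<ge> 2" using n by simp
      from prev_irred[OF sp n2 nr] have pi: "irreducible (P (n-1))" and pe: "P n = sq_subst (P (n-1))" by auto
      obtain Q R where QR: "irreducible Q" "irreducible R" "P n = Q * R" "P (Suc n) = Q"
        using sp n nr unfolding splitting_sequence_def by blast
      have "coeff (P (n-1)) 0 \<noteq> 0" using cnz n2 by simp
      from key[OF pi this _ QR(1,2)] pe QR(3,4)
      show ?thesis by (simp add: sq_lead sq_const)
    qed
    have stepL: "\<bar>lead_coeff (P (Suc n))\<bar> = \<bar>lead_coeff (P n)\<bar> \<and> \<bar>coeff (P (Suc n)) 0\<bar> = \<bar>coeff (P n) 0\<bar>"
      if n: "n \<ge> 1" and S: "\<not> string_is_S P n" for n
    proof -
      have "irreducible (P n)" using S by (simp add: string_is_S_def)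
      then have "P (Suc n) = sq_subst (P n)" using sp n unfolding splitting_sequence_def by blast
      then show ?thesis by (simp add: sq_lead sq_const)
    qed
    have la: "\<bar>lead_coeff (P 1)\<bar> = 1"
    proof (rule seq_one[where a="\<lambda>n. \<bar>lead_coeff (P n)\<bar>" and S="string_is_S P"])
      fix n :: nat assume n: "n \<ge> 1"
      have "lead_coeff (P n) \<noteq> 0" using pnz[OF n] by simp
      then show "\<bar>lead_coeff (P n)\<bar> \<ge> 1" by (simp add: int_one_le_iff_zero_less)
    next
      fix n :: nat assume "n \<ge> 1" "string_is_S P n"
      then show "\<bar>lead_coeff (P n)\<bar> = \<bar>lead_coeff (P (Suc n))\<bar>^2" using stepS by blast
    next
      fix n :: nat assume "n \<ge> 1" "\<not> string_is_S P n"
      then show "\<bar>lead_coeff (P (Suc n))\<bar> = \<bar>lead_coeff (P n)\<bar>" using stepL by blast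
    next
      show "infinite {n. n \<ge> 1 \<and> string_is_S P n}" using inf .
    qed
    have lc: "\<bar>coeff (P 1) 0\<bar> = 1"
    proof (rule seq_one[where a="\<lambda>n. \<bar>coeff (P n) 0\<bar>" and S="string_is_S P"])
      fix n :: nat assume n: "n \<ge> 1"
      have "coeff (P n) 0 \<noteq> 0" using cnz[OF n] by simp
      then show "\<bar>coeff (P n) 0\<bar> \<ge> 1" by (simp add: int_one_le_iff_zero_less)
    next
      fix n :: nat assume "n \<ge> 1" "string_is_S P n"
      then show "\<bar>coeff (P n) 0\<bar> = \<bar>coeff (P (Suc n)) 0\<bar>^2" using stepS by blast
    next
      fix n :: nat assume "n \<ge> 1" "\<not> string_is_S P n"
      then show "\<bar>coeff (P (Suc n)) 0\<bar> = \<bar>coeff (P n) 0\<bar>" using stepL by blast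
    next
      show "infinite {n. n \<ge> 1 \<and> string_is_S P n}" using inf .
    qed
    have "lead_coeff (P 1) \<in> {1, -1}" "coeff (P 1) 0 \<in> {1, -1}" using la lc by auto
    then show ?thesis using irr1 by (simp add: nice_def)
  qed
  show ?thesis using part1 part2 by blast
qed

end
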